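(* Let $F:\mathcal{C}\to\mathcal{D}$ be left adjoint to $G:\mathcal{D}\to\mathcal{C}$, with unit $\eta:1_{\mathcal{C}}\to GF$ and counit $\varepsilon:FG\to 1_{\mathcal{D}}$. 1. $F$ is naturally full if and only if there exists a natural transformation $\nu:GF\to 1_{\mathcal{C}}$ such that $\eta_C\circ\nu_C=\mathrm{id}_{GFC}$ for all $C\in\mathcal{C}$. In this case, $\varepsilon_{FC}$ is an isomorphism in $\mathcal{D}$ with inverse $F(\eta_C)$, for every $C\in\mathcal{C}$. 2. $G$ is naturally full if and only if there exists a natural transformation $\xi:1_{\mathcal{D}}\to FG$ such that $\xi_D\circ\varepsilon_D=\mathrm{id}_{FGD}$ for all $D\in\mathcal{D}$. In this case, $G(\varepsilon_D)$ is an isomorphism in $\mathcal{C}$ with inverse $\eta_{GD}$, for every $D\in\mathcal{D}$.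
   Context: For a functor $F:\mathcal{A}\to\mathcal{B}$, let $\mathcal{F}:\mathrm{Hom}_{\mathcal{A}}(\bullet,\bullet)\to\mathrm{Hom}_{\mathcal{B}}(F(\bullet),F(\bullet))$, $\mathcal{F}_{A,A'}(f)=F(f)$. $F$ is called naturally full if there is a natural transformation $\mathcal{P}:\mathrm{Hom}_{\mathcal{B}}(F(\bullet),F(\bullet))\to\mathrm{Hom}_{\mathcal{A}}(\bullet,\bullet)$ (natural in both variables: $\mathcal{P}_{X,T}(F(h)\circ g\circ F(f))=h\circ\mathcal{P}_{Y,Z}(g)\circ f$) such that $F(\mathcal{P}_{A,A'}(u))=u$ for all $A,A'$ and all $u:F(A)\to F(A')$. *)

theory Defs
  imports Main
begin

text \<open>Categories given by objects, arrows, domain, codomain, composition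
  (comp g f = g after f) and identities.\<close>

record ('o, 'a) category =
  Ob :: "'o set"
  Ar :: "'a set"
  dom :: "'a \<Rightarrow> 'o"
  cod :: "'a \<Rightarrow> 'o"
  comp :: "'a \<Rightarrow> 'a \<Rightarrow> 'a"
  idt :: "'o \<Rightarrow> 'a"

definition Hom :: "('o, 'a) category \<Rightarrow> 'o \<Rightarrow> 'o \<Rightarrow> 'a set" where
  "Hom C A B = {f \<in> Ar C. dom C f = A \<and> cod C f = B}"

definition is_category :: "('o, 'a) category \<Rightarrow> bool" where
  "is_category C \<longleftrightarrow>
     (\<forall>f \<in> Ar C. dom C f \<in> Ob C \<and> cod C f \<in> Ob C)
   \<and> (\<forall>A \<in> Ob C. idt C A \<in> Hom C A A)
   \<and> (\<forall>A \<in> Ob C. \<forall>B \<in> Ob C. \<forall>D \<in> Ob C. \<forall>f \<in> Hom C A B. \<forall>g \<in> Hom C B D.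
         comp C g f \<in> Hom C A D)
   \<and> (\<forall>A \<in> Ob C. \<forall>B \<in> Ob C. \<forall>f \<in> Hom C A B.
         comp C (idt C B) f = f \<and> comp C f (idt C A) = f)
   \<and> (\<forall>A \<in> Ob C. \<forall>B \<in> Ob C. \<forall>D \<in> Ob C. \<forall>E \<in> Ob C.
       \<forall>f \<in> Hom C A B. \<forall>g \<in> Hom C B D. \<forall>h \<in> Hom C D E.
         comp C h (comp C g f) = comp C (comp C h g) f)"

definition is_functor ::
  "('o, 'a) category \<Rightarrow> ('p, 'b) category \<Rightarrow> ('o \<Rightarrow> 'p) \<Rightarrow> ('a \<Rightarrow> 'b) \<Rightarrow> bool" where
  "is_functor C D Fo Fa \<longleftrightarrow>
     is_category C \<and> is_category D
   \<and> (\<forall>A \<in> Ob C. Fo A \<in> Ob D)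
   \<and> (\<forall>A \<in> Ob C. \<forall>B \<in> Ob C. \<forall>f \<in> Hom C A B. Fa f \<in> Hom D (Fo A) (Fo B))
   \<and> (\<forall>A \<in> Ob C. Fa (idt C A) = idt D (Fo A))
   \<and> (\<forall>A \<in> Ob C. \<forall>B \<in> Ob C. \<forall>E \<in> Ob C. \<forall>f \<in> Hom C A B. \<forall>g \<in> Hom C B E.
         Fa (comp C g f) = comp D (Fa g) (Fa f))"

definition is_nat_trans ::
  "('o, 'a) category \<Rightarrow> ('p, 'b) category \<Rightarrow> ('o \<Rightarrow> 'p) \<Rightarrow> ('a \<Rightarrow> 'b)
     \<Rightarrow> ('o \<Rightarrow> 'p) \<Rightarrow> ('a \<Rightarrow> 'b) \<Rightarrow> ('o \<Rightarrow> 'b) \<Rightarrow> bool" where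
  "is_nat_trans C D Fo Fa Go Ga tau \<longleftrightarrow>
     is_functor C D Fo Fa \<and> is_functor C D Go Ga
   \<and> (\<forall>A \<in> Ob C. tau A \<in> Hom D (Fo A) (Go A))
   \<and> (\<forall>A \<in> Ob C. \<forall>B \<in> Ob C. \<forall>f \<in> Hom C A B.
         comp D (tau B) (Fa f) = comp D (Ga f) (tau A))"

definition is_adjunction ::
  "('o, 'a) category \<Rightarrow> ('p, 'b) category \<Rightarrow> ('o \<Rightarrow> 'p) \<Rightarrow> ('a \<Rightarrow> 'b)
     \<Rightarrow> ('p \<Rightarrow> 'o) \<Rightarrow> ('b \<Rightarrow> 'a) \<Rightarrow> ('o \<Rightarrow> 'a) \<Rightarrow> ('p \<Rightarrow> 'b) \<Rightarrow> bool" where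
  "is_adjunction C D Fo Fa Go Ga eta eps \<longleftrightarrow>
     is_functor C D Fo Fa \<and> is_functor D C Go Ga
   \<and> is_nat_trans C C id id (Go \<circ> Fo) (Ga \<circ> Fa) eta
   \<and> is_nat_trans D D (Fo \<circ> Go) (Fa \<circ> Ga) id id eps
   \<and> (\<forall>A \<in> Ob C. comp D (eps (Fo A)) (Fa (eta A)) = idt D (Fo A))
   \<and> (\<forall>B \<in> Ob D. comp C (Ga (eps B)) (eta (Go B)) = idt C (Go B))"

definition naturally_full ::
  "('o, 'a) category \<Rightarrow> ('p, 'b) category \<Rightarrow> ('o \<Rightarrow> 'p) \<Rightarrow> ('a \<Rightarrow> 'b) \<Rightarrow> bool" where
  "naturally_full C D Fo Fa \<longleftrightarrow>
     (\<exists>P :: 'o \<Rightarrow> 'o \<Rightarrow> 'b \<Rightarrow> 'a.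
        (\<forall>X \<in> Ob C. \<forall>Y \<in> Ob C. \<forall>u \<in> Hom D (Fo X) (Fo Y). P X Y u \<in> Hom C X Y)
      \<and> (\<forall>X \<in> Ob C. \<forall>Y \<in> Ob C. \<forall>Z \<in> Ob C. \<forall>T \<in> Ob C.
           \<forall>f \<in> Hom C X Y. \<forall>g \<in> Hom D (Fo Y) (Fo Z). \<forall>h \<in> Hom C Z T.
             P X T (comp D (Fa h) (comp D g (Fa f))) = comp C h (comp C (P Y Z g) f))
      \<and> (\<forall>X \<in> Ob C. \<forall>Y \<in> Ob C. \<forall>u \<in> Hom D (Fo X) (Fo Y). Fa (P X Y u) = u))"

end

theory Submission
  imports Defs
begin

lemma cat_hom_ob: "is_category C \<Longrightarrow> f \<in> Hom C A B \<Longrightarrow> A \<in> Ob C \<and> B \<in> Ob C"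
  by (auto simp: is_category_def Hom_def)
lemma cat_id: "is_category C \<Longrightarrow> A \<in> Ob C \<Longrightarrow> idt C A \<in> Hom C A A"
  by (auto simp: is_category_def)
lemma cat_comp: "is_category C \<Longrightarrow> f \<in> Hom C A B \<Longrightarrow> g \<in> Hom C B E \<Longrightarrow> comp C g f \<in> Hom C A E"
  using cat_hom_ob[of C f A B] cat_hom_ob[of C g B E] unfolding is_category_def by blast
lemma cat_idl: "is_category C \<Longrightarrow> f \<in> Hom C A B \<Longrightarrow> comp C (idt C B) f = f"
  using cat_hom_ob[of C f A B] unfolding is_category_def by blast
lemma cat_idr: "is_category C \<Longrightarrow> f \<in> Hom C A B \<Longrightarrow> comp C f (idt C A) = f"
  using cat_hom_ob[of C f A B] unfolding is_category_def by blast
lemma cat_assoc: "is_category C \<Longrightarrow> f \<in> Hom C A B \<Longrightarrow> g \<in> Hom C B E \<Longrightarrow> h \<in> Hom C E K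
  \<Longrightarrow> comp C h (comp C g f) = comp C (comp C h g) f"
  using cat_hom_ob[of C f A B] cat_hom_ob[of C g B E] cat_hom_ob[of C h E K]
  unfolding is_category_def by blast

lemma fun_cat: "is_functor C D Fo Fa \<Longrightarrow> is_category C \<and> is_category D"
  by (simp add: is_functor_def)
lemma fun_ob: "is_functor C D Fo Fa \<Longrightarrow> A \<in> Ob C \<Longrightarrow> Fo A \<in> Ob D"
  by (simp add: is_functor_def)
lemma fun_hom: "is_functor C D Fo Fa \<Longrightarrow> f \<in> Hom C A B \<Longrightarrow> Fa f \<in> Hom D (Fo A) (Fo B)"
  using cat_hom_ob[of C f A B] unfolding is_functor_def by blast
lemma fun_id: "is_functor C D Fo Fa \<Longrightarrow> A \<in> Ob C \<Longrightarrow> Fa (idt C A) = idt D (Fo A)"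
  by (simp add: is_functor_def)
lemma fun_comp: "is_functor C D Fo Fa \<Longrightarrow> f \<in> Hom C A B \<Longrightarrow> g \<in> Hom C B E
  \<Longrightarrow> Fa (comp C g f) = comp D (Fa g) (Fa f)"
  using cat_hom_ob[of C f A B] cat_hom_ob[of C g B E] unfolding is_functor_def by blast

lemma nt_fun: "is_nat_trans C D Fo Fa Go Ga t \<Longrightarrow> is_functor C D Fo Fa \<and> is_functor C D Go Ga"
  by (simp add: is_nat_trans_def)
lemma nt_hom: "is_nat_trans C D Fo Fa Go Ga t \<Longrightarrow> A \<in> Ob C \<Longrightarrow> t A \<in> Hom D (Fo A) (Go A)"
  by (simp add: is_nat_trans_def)
lemma nt_nat: "is_nat_trans C D Fo Fa Go Ga t \<Longrightarrow> f \<in> Hom C A B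
  \<Longrightarrow> comp D (t B) (Fa f) = comp D (Ga f) (t A)"
  using cat_hom_ob[of C f A B] unfolding is_nat_trans_def is_functor_def by blast

locale adjn =
  fixes C :: "('o, 'a) category" and D :: "('p, 'b) category"
    and Fo :: "'o \<Rightarrow> 'p" and Fa :: "'a \<Rightarrow> 'b"
    and Go :: "'p \<Rightarrow> 'o" and Ga :: "'b \<Rightarrow> 'a"
    and eta :: "'o \<Rightarrow> 'a" and eps :: "'p \<Rightarrow> 'b"
  assumes adj: "is_adjunction C D Fo Fa Go Ga eta eps"
begin

lemma F: "is_functor C D Fo Fa" and G: "is_functor D C Go Ga"
  and etaN: "is_nat_trans C C id id (Go \<circ> Fo) (Ga \<circ> Fa) eta"
  and epsN: "is_nat_trans D D (Fo \<circ> Go) (Fa \<circ> Ga) id id eps"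
  and tri1: "A \<in> Ob C \<Longrightarrow> comp D (eps (Fo A)) (Fa (eta A)) = idt D (Fo A)"
  and tri2: "B \<in> Ob D \<Longrightarrow> comp C (Ga (eps B)) (eta (Go B)) = idt C (Go B)"
  using adj by (auto simp: is_adjunction_def)

lemma Cc: "is_category C" and Dc: "is_category D" using F by (auto simp: is_functor_def)

lemma Fh: "f \<in> Hom C A B \<Longrightarrow> Fa f \<in> Hom D (Fo A) (Fo B)" using fun_hom[OF F] .
lemma Gh: "f \<in> Hom D A B \<Longrightarrow> Ga f \<in> Hom C (Go A) (Go B)" using fun_hom[OF G] .
lemma Fob: "A \<in> Ob C \<Longrightarrow> Fo A \<in> Ob D" using fun_ob[OF F] .
lemma Gob: "A \<in> Ob D \<Longrightarrow> Go A \<in> Ob C" using fun_ob[OF G] .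
lemma eta_h: "A \<in> Ob C \<Longrightarrow> eta A \<in> Hom C A (Go (Fo A))" using nt_hom[OF etaN] by simp
lemma eps_h: "A \<in> Ob D \<Longrightarrow> eps A \<in> Hom D (Fo (Go A)) A" using nt_hom[OF epsN] by simp
lemma eta_n: "f \<in> Hom C A B \<Longrightarrow> comp C (eta B) f = comp C (Ga (Fa f)) (eta A)"
  using nt_nat[OF etaN] by simp
lemma eps_n: "f \<in> Hom D A B \<Longrightarrow> comp D (eps B) (Fa (Ga f)) = comp D f (eps A)"
  using nt_nat[OF epsN] by simp
lemma obC: "f \<in> Hom C A B \<Longrightarrow> A \<in> Ob C \<and> B \<in> Ob C" using cat_hom_ob[OF Cc] .
lemma obD: "f \<in> Hom D A B \<Longrightarrow> A \<in> Ob D \<and> B \<in> Ob D" using cat_hom_ob[OF Dc] .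


lemma GFfun: "is_functor C C (Go \<circ> Fo) (Ga \<circ> Fa)" and Cid: "is_functor C C id id"
  using nt_fun[OF etaN] by auto
lemma FGfun: "is_functor D D (Fo \<circ> Go) (Fa \<circ> Ga)" and Did: "is_functor D D id id"
  using nt_fun[OF epsN] by auto

lemma part1a:
  assumes nf: "naturally_full C D Fo Fa"
  shows "\<exists>nu. is_nat_trans C C (Go \<circ> Fo) (Ga \<circ> Fa) id id nu
                 \<and> (\<forall>X \<in> Ob C. comp C (eta X) (nu X) = idt C (Go (Fo X)))"
    and "\<forall>X \<in> Ob C. comp D (eps (Fo X)) (Fa (eta X)) = idt D (Fo X)
                      \<and> comp D (Fa (eta X)) (eps (Fo X)) = idt D (Fo (Go (Fo X)))"
proof -
  obtain P :: "'o \<Rightarrow> 'o \<Rightarrow> 'b \<Rightarrow> 'a" where P1: "\<forall>X \<in> Ob C. \<forall>Y \<in> Ob C. \<forall>u \<in> Hom D (Fo X) (Fo Y). P X Y u \<in> Hom C X Y"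
      and P2: "\<forall>X \<in> Ob C. \<forall>Y \<in> Ob C. \<forall>Z \<in> Ob C. \<forall>T \<in> Ob C.
           \<forall>f \<in> Hom C X Y. \<forall>g \<in> Hom D (Fo Y) (Fo Z). \<forall>h \<in> Hom C Z T.
             P X T (comp D (Fa h) (comp D g (Fa f))) = comp C h (comp C (P Y Z g) f)"
      and P3: "\<forall>X \<in> Ob C. \<forall>Y \<in> Ob C. \<forall>u \<in> Hom D (Fo X) (Fo Y). Fa (P X Y u) = u"
    using nf unfolding naturally_full_def by blast
  have Ph: "\<And>X Y u. X \<in> Ob C \<Longrightarrow> Y \<in> Ob C \<Longrightarrow> u \<in> Hom D (Fo X) (Fo Y) \<Longrightarrow> P X Y u \<in> Hom C X Y"
    using P1 by blast
  have Pn: "\<And>X Y Z T f g h. X \<in> Ob C \<Longrightarrow> Y \<in> Ob C \<Longrightarrow> Z \<in> Ob C \<Longrightarrow> T \<in> Ob C \<Longrightarrow>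
           f \<in> Hom C X Y \<Longrightarrow> g \<in> Hom D (Fo Y) (Fo Z) \<Longrightarrow> h \<in> Hom C Z T \<Longrightarrow>
             P X T (comp D (Fa h) (comp D g (Fa f))) = comp C h (comp C (P Y Z g) f)"
    using P2 by blast
  have PF: "\<And>X Y u. X \<in> Ob C \<Longrightarrow> Y \<in> Ob C \<Longrightarrow> u \<in> Hom D (Fo X) (Fo Y) \<Longrightarrow> Fa (P X Y u) = u"
    using P3 by blast
  have Pl: "P Y T (comp D (Fa h) g) = comp C h (P Y Z g)"
    if "Y \<in> Ob C" "Z \<in> Ob C" "T \<in> Ob C" "g \<in> Hom D (Fo Y) (Fo Z)" "h \<in> Hom C Z T" for Y Z T g h
  proof -
    have "P Y T (comp D (Fa h) (comp D g (Fa (idt C Y)))) = comp C h (comp C (P Y Z g) (idt C Y))"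
      using Pn[of Y Y Z T "idt C Y" g h] that cat_id[OF Cc] by blast
    then show ?thesis using fun_id[OF F that(1)] cat_idr[OF Dc that(4)] cat_idr[OF Cc Ph[OF that(1,2,4)]] by simp
  qed
  have Pr: "P X Z (comp D g (Fa f)) = comp C (P Y Z g) f"
    if "X \<in> Ob C" "Y \<in> Ob C" "Z \<in> Ob C" "g \<in> Hom D (Fo Y) (Fo Z)" "f \<in> Hom C X Y" for X Y Z g f
  proof -
    have "P X Z (comp D (Fa (idt C Z)) (comp D g (Fa f))) = comp C (idt C Z) (comp C (P Y Z g) f)"
      using Pn[of X Y Z Z f g "idt C Z"] that cat_id[OF Cc] by blast
    moreover have "comp D g (Fa f) \<in> Hom D (Fo X) (Fo Z)" using cat_comp[OF Dc Fh[OF that(5)] that(4)] .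
    moreover have "comp C (P Y Z g) f \<in> Hom C X Z" using cat_comp[OF Cc that(5) Ph[OF that(2,3,4)]] .
    ultimately show ?thesis using fun_id[OF F that(3)] cat_idl[OF Dc] cat_idl[OF Cc] by simp
  qed
  define nu where "nu X = P (Go (Fo X)) X (eps (Fo X))" for X
  have nu_h: "nu X \<in> Hom C (Go (Fo X)) X" if "X \<in> Ob C" for X
    unfolding nu_def using Ph[OF Gob[OF Fob[OF that]] that eps_h[OF Fob[OF that]]] .
  have Fnu: "Fa (nu X) = eps (Fo X)" if "X \<in> Ob C" for X
    unfolding nu_def using PF[OF Gob[OF Fob[OF that]] that eps_h[OF Fob[OF that]]] .
  have nu_n: "comp C (nu B) (Ga (Fa f)) = comp C f (nu A)" if f: "f \<in> Hom C A B" for A B f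
  proof -
    have ob: "A \<in> Ob C" "B \<in> Ob C" using obC[OF f] by auto
    have "comp C f (nu A) = P (Go (Fo A)) B (comp D (Fa f) (eps (Fo A)))"
      unfolding nu_def using Pl[OF Gob[OF Fob[OF ob(1)]] ob(1) ob(2) eps_h[OF Fob[OF ob(1)]] f] by simp
    also have "\<dots> = P (Go (Fo A)) B (comp D (eps (Fo B)) (Fa (Ga (Fa f))))"
      using eps_n[OF Fh[OF f]] by simp
    also have "\<dots> = comp C (nu B) (Ga (Fa f))"
      unfolding nu_def using Pr[OF Gob[OF Fob[OF ob(1)]] Gob[OF Fob[OF ob(2)]] ob(2) eps_h[OF Fob[OF ob(2)]] Gh[OF Fh[OF f]]] by simp
    finally show ?thesis by simp
  qed
  have sec: "comp C (eta X) (nu X) = idt C (Go (Fo X))" if "X \<in> Ob C" for X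
    using eta_n[OF nu_h[OF that]] Fnu[OF that] tri2[OF Fob[OF that]] by simp
  have "is_nat_trans C C (Go \<circ> Fo) (Ga \<circ> Fa) id id nu"
    unfolding is_nat_trans_def using GFfun Cid nu_h nu_n by simp
  then show "\<exists>nu. is_nat_trans C C (Go \<circ> Fo) (Ga \<circ> Fa) id id nu
                 \<and> (\<forall>X \<in> Ob C. comp C (eta X) (nu X) = idt C (Go (Fo X)))" using sec by blast
  show "\<forall>X \<in> Ob C. comp D (eps (Fo X)) (Fa (eta X)) = idt D (Fo X)
                      \<and> comp D (Fa (eta X)) (eps (Fo X)) = idt D (Fo (Go (Fo X)))"
  proof
    fix X assume X: "X \<in> Ob C"
    have "comp D (Fa (eta X)) (eps (Fo X)) = Fa (comp C (eta X) (nu X))"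
      using fun_comp[OF F nu_h[OF X] eta_h[OF X]] Fnu[OF X] by simp
    also have "\<dots> = idt D (Fo (Go (Fo X)))" using sec[OF X] fun_id[OF F] X Gob Fob by simp
    finally show "comp D (eps (Fo X)) (Fa (eta X)) = idt D (Fo X)
                      \<and> comp D (Fa (eta X)) (eps (Fo X)) = idt D (Fo (Go (Fo X)))"
      using tri1[OF X] by simp
  qed
qed


lemma transp1:
  assumes a: "a \<in> Hom D (Fo X) B" and X: "X \<in> Ob C"
  shows "a = comp D (eps B) (Fa (comp C (Ga a) (eta X)))"
proof -
  have B: "B \<in> Ob D" using obD[OF a] by auto
  have "comp D (eps B) (Fa (comp C (Ga a) (eta X))) = comp D (eps B) (comp D (Fa (Ga a)) (Fa (eta X)))"
    using fun_comp[OF F eta_h[OF X] Gh[OF a]] by simp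
  also have "\<dots> = comp D (comp D (eps B) (Fa (Ga a))) (Fa (eta X))"
    using cat_assoc[OF Dc Fh[OF eta_h[OF X]] Fh[OF Gh[OF a]] eps_h[OF B]] .
  also have "\<dots> = comp D (comp D a (eps (Fo X))) (Fa (eta X))" using eps_n[OF a] by simp
  also have "\<dots> = comp D a (comp D (eps (Fo X)) (Fa (eta X)))"
    using cat_assoc[OF Dc Fh[OF eta_h[OF X]] eps_h[OF Fob[OF X]] a] by simp
  also have "\<dots> = a" using tri1[OF X] cat_idr[OF Dc a] by simp
  finally show ?thesis by simp
qed

lemma part1b:
  assumes nuN: "is_nat_trans C C (Go \<circ> Fo) (Ga \<circ> Fa) id id nu"
    and sec: "\<forall>X \<in> Ob C. comp C (eta X) (nu X) = idt C (Go (Fo X))"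
  shows "naturally_full C D Fo Fa"
proof -
  have nu_h: "nu X \<in> Hom C (Go (Fo X)) X" if "X \<in> Ob C" for X using nt_hom[OF nuN that] by simp
  have nu_n: "comp C (nu B) (Ga (Fa f)) = comp C f (nu A)" if "f \<in> Hom C A B" for f A B
    using nt_nat[OF nuN that] by simp
  have Fnu: "Fa (nu Y) = eps (Fo Y)" if Y: "Y \<in> Ob C" for Y
  proof -
    have GFY: "Go (Fo Y) \<in> Ob C" using Gob[OF Fob[OF Y]] .
    have "comp C (Ga (Fa (nu Y))) (eta (Go (Fo Y))) = idt C (Go (Fo Y))"
      using eta_n[OF nu_h[OF Y]] sec Y by simp
    then have "Fa (nu Y) = comp D (eps (Fo Y)) (Fa (idt C (Go (Fo Y))))"
      using transp1[OF Fh[OF nu_h[OF Y]] GFY] by simp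
    also have "\<dots> = comp D (eps (Fo Y)) (Fa (comp C (Ga (eps (Fo Y))) (eta (Go (Fo Y)))))"
      using tri2[OF Fob[OF Y]] by simp
    also have "\<dots> = eps (Fo Y)" using transp1[OF eps_h[OF Fob[OF Y]] GFY] by simp
    finally show ?thesis .
  qed
  define P where "P X Y u = comp C (nu Y) (comp C (Ga u) (eta X))" for X Y u
  have Ph: "P X Y u \<in> Hom C X Y" if "X \<in> Ob C" "Y \<in> Ob C" "u \<in> Hom D (Fo X) (Fo Y)" for X Y u
    unfolding P_def using cat_comp[OF Cc cat_comp[OF Cc eta_h[OF that(1)] Gh[OF that(3)]] nu_h[OF that(2)]] .
  have PF: "Fa (P X Y u) = u" if "X \<in> Ob C" "Y \<in> Ob C" "u \<in> Hom D (Fo X) (Fo Y)" for X Y u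
  proof -
    have gu: "comp C (Ga u) (eta X) \<in> Hom C X (Go (Fo Y))"
      using cat_comp[OF Cc eta_h[OF that(1)] Gh[OF that(3)]] .
    have "Fa (P X Y u) = comp D (Fa (nu Y)) (Fa (comp C (Ga u) (eta X)))"
      unfolding P_def using fun_comp[OF F gu nu_h[OF that(2)]] .
    also have "\<dots> = u" using Fnu[OF that(2)] transp1[OF that(3,1)] by simp
    finally show ?thesis .
  qed
  have Pn: "P X T (comp D (Fa h) (comp D g (Fa f))) = comp C h (comp C (P Y Z g) f)"
    if ob: "X \<in> Ob C" "Y \<in> Ob C" "Z \<in> Ob C" "T \<in> Ob C"
      and f: "f \<in> Hom C X Y" and g: "g \<in> Hom D (Fo Y) (Fo Z)" and h: "h \<in> Hom C Z T"
    for X Y Z T f g h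
  proof -
    define a where "a = Ga (Fa h)"
    define b where "b = Ga g"
    define c where "c = Ga (Fa f)"
    have ah: "a \<in> Hom C (Go (Fo Z)) (Go (Fo T))" unfolding a_def using Gh[OF Fh[OF h]] .
    have bh: "b \<in> Hom C (Go (Fo Y)) (Go (Fo Z))" unfolding b_def using Gh[OF g] .
    have ch: "c \<in> Hom C (Go (Fo X)) (Go (Fo Y))" unfolding c_def using Gh[OF Fh[OF f]] .
    have eX: "eta X \<in> Hom C X (Go (Fo X))" using eta_h[OF ob(1)] .
    have eY: "eta Y \<in> Hom C Y (Go (Fo Y))" using eta_h[OF ob(2)] .
    have nT: "nu T \<in> Hom C (Go (Fo T)) T" using nu_h[OF ob(4)] .
    have nZ: "nu Z \<in> Hom C (Go (Fo Z)) Z" using nu_h[OF ob(3)] .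
    have gf: "comp D g (Fa f) \<in> Hom D (Fo X) (Fo Z)" using cat_comp[OF Dc Fh[OF f] g] .
    have "Ga (comp D (Fa h) (comp D g (Fa f))) = comp C a (comp C b c)"
      unfolding a_def b_def c_def using fun_comp[OF G gf Fh[OF h]] fun_comp[OF G Fh[OF f] g] by simp
    then have "P X T (comp D (Fa h) (comp D g (Fa f))) = comp C (nu T) (comp C (comp C a (comp C b c)) (eta X))"
      unfolding P_def by simp
    also have "\<dots> = comp C (nu T) (comp C a (comp C (comp C b c) (eta X)))"
      using cat_assoc[OF Cc eX cat_comp[OF Cc ch bh] ah] by simp
    also have "\<dots> = comp C (nu T) (comp C a (comp C b (comp C c (eta X))))"
      using cat_assoc[OF Cc eX ch bh] by simp
    also have "\<dots> = comp C (comp C (nu T) a) (comp C b (comp C c (eta X)))"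
      using cat_assoc[OF Cc cat_comp[OF Cc cat_comp[OF Cc eX ch] bh] ah nT] .
    also have "\<dots> = comp C (comp C h (nu Z)) (comp C b (comp C (eta Y) f))"
      unfolding a_def c_def using nu_n[OF h] eta_n[OF f] by simp
    also have "\<dots> = comp C h (comp C (nu Z) (comp C b (comp C (eta Y) f)))"
      using cat_assoc[OF Cc cat_comp[OF Cc cat_comp[OF Cc f eY] bh] nZ h] by simp
    also have "\<dots> = comp C h (comp C (nu Z) (comp C (comp C b (eta Y)) f))"
      using cat_assoc[OF Cc f eY bh] by simp
    also have "\<dots> = comp C h (comp C (comp C (nu Z) (comp C b (eta Y))) f)"
      using cat_assoc[OF Cc f cat_comp[OF Cc eY bh] nZ] by simp
    also have "\<dots> = comp C h (comp C (P Y Z g) f)" unfolding P_def b_def by simp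
    finally show ?thesis .
  qed
  show ?thesis unfolding naturally_full_def
    apply (rule exI[of _ P])
    using Ph Pn PF by blast
qed


lemma part2a:
  assumes nf: "naturally_full D C Go Ga"
  shows "\<exists>xi. is_nat_trans D D id id (Fo \<circ> Go) (Fa \<circ> Ga) xi
                 \<and> (\<forall>Y \<in> Ob D. comp D (xi Y) (eps Y) = idt D (Fo (Go Y)))"
    and "\<forall>Y \<in> Ob D. comp C (Ga (eps Y)) (eta (Go Y)) = idt C (Go Y)
                      \<and> comp C (eta (Go Y)) (Ga (eps Y)) = idt C (Go (Fo (Go Y)))"
proof -
  obtain P :: "'p \<Rightarrow> 'p \<Rightarrow> 'a \<Rightarrow> 'b" where P1: "\<forall>X \<in> Ob D. \<forall>Y \<in> Ob D. \<forall>u \<in> Hom C (Go X) (Go Y). P X Y u \<in> Hom D X Y"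
      and P2: "\<forall>X \<in> Ob D. \<forall>Y \<in> Ob D. \<forall>Z \<in> Ob D. \<forall>T \<in> Ob D.
           \<forall>f \<in> Hom D X Y. \<forall>g \<in> Hom C (Go Y) (Go Z). \<forall>h \<in> Hom D Z T.
             P X T (comp C (Ga h) (comp C g (Ga f))) = comp D h (comp D (P Y Z g) f)"
      and P3: "\<forall>X \<in> Ob D. \<forall>Y \<in> Ob D. \<forall>u \<in> Hom C (Go X) (Go Y). Ga (P X Y u) = u"
    using nf unfolding naturally_full_def by blast
  have Ph: "\<And>X Y u. X \<in> Ob D \<Longrightarrow> Y \<in> Ob D \<Longrightarrow> u \<in> Hom C (Go X) (Go Y) \<Longrightarrow> P X Y u \<in> Hom D X Y"
    using P1 by blast
  have Pn: "\<And>X Y Z T f g h. X \<in> Ob D \<Longrightarrow> Y \<in> Ob D \<Longrightarrow> Z \<in> Ob D \<Longrightarrow> T \<in> Ob D \<Longrightarrow>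
           f \<in> Hom D X Y \<Longrightarrow> g \<in> Hom C (Go Y) (Go Z) \<Longrightarrow> h \<in> Hom D Z T \<Longrightarrow>
             P X T (comp C (Ga h) (comp C g (Ga f))) = comp D h (comp D (P Y Z g) f)"
    using P2 by blast
  have PG: "\<And>X Y u. X \<in> Ob D \<Longrightarrow> Y \<in> Ob D \<Longrightarrow> u \<in> Hom C (Go X) (Go Y) \<Longrightarrow> Ga (P X Y u) = u"
    using P3 by blast
  have Pl: "P Y T (comp C (Ga h) g) = comp D h (P Y Z g)"
    if "Y \<in> Ob D" "Z \<in> Ob D" "T \<in> Ob D" "g \<in> Hom C (Go Y) (Go Z)" "h \<in> Hom D Z T" for Y Z T g h
  proof -
    have "P Y T (comp C (Ga h) (comp C g (Ga (idt D Y)))) = comp D h (comp D (P Y Z g) (idt D Y))"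
      using Pn[of Y Y Z T "idt D Y" g h] that cat_id[OF Dc] by blast
    then show ?thesis using fun_id[OF G that(1)] cat_idr[OF Cc that(4)] cat_idr[OF Dc Ph[OF that(1,2,4)]] by simp
  qed
  have Pr: "P X Z (comp C g (Ga f)) = comp D (P Y Z g) f"
    if "X \<in> Ob D" "Y \<in> Ob D" "Z \<in> Ob D" "g \<in> Hom C (Go Y) (Go Z)" "f \<in> Hom D X Y" for X Y Z g f
  proof -
    have "P X Z (comp C (Ga (idt D Z)) (comp C g (Ga f))) = comp D (idt D Z) (comp D (P Y Z g) f)"
      using Pn[of X Y Z Z f g "idt D Z"] that cat_id[OF Dc] by blast
    moreover have "comp C g (Ga f) \<in> Hom C (Go X) (Go Z)" using cat_comp[OF Cc Gh[OF that(5)] that(4)] .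
    moreover have "comp D (P Y Z g) f \<in> Hom D X Z" using cat_comp[OF Dc that(5) Ph[OF that(2,3,4)]] .
    ultimately show ?thesis using fun_id[OF G that(3)] cat_idl[OF Dc] cat_idl[OF Cc] by simp
  qed
  define xi where "xi Y = P Y (Fo (Go Y)) (eta (Go Y))" for Y
  have xi_h: "xi Y \<in> Hom D Y (Fo (Go Y))" if "Y \<in> Ob D" for Y
    unfolding xi_def using Ph[OF that Fob[OF Gob[OF that]] eta_h[OF Gob[OF that]]] .
  have Gxi: "Ga (xi Y) = eta (Go Y)" if "Y \<in> Ob D" for Y
    unfolding xi_def using PG[OF that Fob[OF Gob[OF that]] eta_h[OF Gob[OF that]]] .
  have xi_n: "comp D (xi B) f = comp D (Fa (Ga f)) (xi A)" if f: "f \<in> Hom D A B" for A B f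
  proof -
    have ob: "A \<in> Ob D" "B \<in> Ob D" using obD[OF f] by auto
    have "comp D (Fa (Ga f)) (xi A) = P A (Fo (Go B)) (comp C (Ga (Fa (Ga f))) (eta (Go A)))"
      unfolding xi_def using Pl[OF ob(1) Fob[OF Gob[OF ob(1)]] Fob[OF Gob[OF ob(2)]] eta_h[OF Gob[OF ob(1)]] Fh[OF Gh[OF f]]] by simp
    also have "\<dots> = P A (Fo (Go B)) (comp C (eta (Go B)) (Ga f))"
      using eta_n[OF Gh[OF f]] by simp
    also have "\<dots> = comp D (xi B) f"
      unfolding xi_def using Pr[OF ob(1) ob(2) Fob[OF Gob[OF ob(2)]] eta_h[OF Gob[OF ob(2)]] f] by simp
    finally show ?thesis by simp
  qed
  have sec: "comp D (xi Y) (eps Y) = idt D (Fo (Go Y))" if "Y \<in> Ob D" for Y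
    using eps_n[OF xi_h[OF that]] Gxi[OF that] tri1[OF Gob[OF that]] by simp
  have "is_nat_trans D D id id (Fo \<circ> Go) (Fa \<circ> Ga) xi"
    unfolding is_nat_trans_def using FGfun Did xi_h xi_n by simp
  then show "\<exists>xi. is_nat_trans D D id id (Fo \<circ> Go) (Fa \<circ> Ga) xi
                 \<and> (\<forall>Y \<in> Ob D. comp D (xi Y) (eps Y) = idt D (Fo (Go Y)))" using sec by blast
  show "\<forall>Y \<in> Ob D. comp C (Ga (eps Y)) (eta (Go Y)) = idt C (Go Y)
                      \<and> comp C (eta (Go Y)) (Ga (eps Y)) = idt C (Go (Fo (Go Y)))"
  proof
    fix Y assume Y: "Y \<in> Ob D"
    have "comp C (eta (Go Y)) (Ga (eps Y)) = Ga (comp D (xi Y) (eps Y))"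
      using fun_comp[OF G eps_h[OF Y] xi_h[OF Y]] Gxi[OF Y] by simp
    also have "\<dots> = idt C (Go (Fo (Go Y)))" using sec[OF Y] fun_id[OF G] Y Gob Fob by simp
    finally show "comp C (Ga (eps Y)) (eta (Go Y)) = idt C (Go Y)
                      \<and> comp C (eta (Go Y)) (Ga (eps Y)) = idt C (Go (Fo (Go Y)))"
      using tri2[OF Y] by simp
  qed
qed

lemma transp2:
  assumes b: "b \<in> Hom C A (Go B)" and B: "B \<in> Ob D"
  shows "b = comp C (Ga (comp D (eps B) (Fa b))) (eta A)"
proof -
  have A: "A \<in> Ob C" using obC[OF b] by auto
  have "comp C (Ga (comp D (eps B) (Fa b))) (eta A) = comp C (comp C (Ga (eps B)) (Ga (Fa b))) (eta A)"
    using fun_comp[OF G Fh[OF b] eps_h[OF B]] by simp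
  also have "\<dots> = comp C (Ga (eps B)) (comp C (Ga (Fa b)) (eta A))"
    using cat_assoc[OF Cc eta_h[OF A] Gh[OF Fh[OF b]] Gh[OF eps_h[OF B]]] by simp
  also have "\<dots> = comp C (Ga (eps B)) (comp C (eta (Go B)) b)" using eta_n[OF b] by simp
  also have "\<dots> = comp C (comp C (Ga (eps B)) (eta (Go B))) b"
    using cat_assoc[OF Cc b eta_h[OF Gob[OF B]] Gh[OF eps_h[OF B]]] .
  also have "\<dots> = b" using tri2[OF B] cat_idl[OF Cc b] by simp
  finally show ?thesis by simp
qed

lemma part2b:
  assumes xiN: "is_nat_trans D D id id (Fo \<circ> Go) (Fa \<circ> Ga) xi"
    and sec: "\<forall>Y \<in> Ob D. comp D (xi Y) (eps Y) = idt D (Fo (Go Y))"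
  shows "naturally_full D C Go Ga"
proof -
  have xi_h: "xi X \<in> Hom D X (Fo (Go X))" if "X \<in> Ob D" for X using nt_hom[OF xiN that] by simp
  have xi_n: "comp D (xi B) f = comp D (Fa (Ga f)) (xi A)" if "f \<in> Hom D A B" for f A B
    using nt_nat[OF xiN that] by simp
  have Gxi: "Ga (xi Y) = eta (Go Y)" if Y: "Y \<in> Ob D" for Y
  proof -
    have FGY: "Fo (Go Y) \<in> Ob D" using Fob[OF Gob[OF Y]] .
    have "comp D (eps (Fo (Go Y))) (Fa (Ga (xi Y))) = idt D (Fo (Go Y))"
      using eps_n[OF xi_h[OF Y]] sec Y by simp
    then have "Ga (xi Y) = comp C (Ga (idt D (Fo (Go Y)))) (eta (Go Y))"
      using transp2[OF Gh[OF xi_h[OF Y]] FGY] by simp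
    also have "\<dots> = comp C (Ga (comp D (eps (Fo (Go Y))) (Fa (eta (Go Y))))) (eta (Go Y))"
      using tri1[OF Gob[OF Y]] by simp
    also have "\<dots> = eta (Go Y)" using transp2[OF eta_h[OF Gob[OF Y]] FGY] by simp
    finally show ?thesis .
  qed
  define P where "P X Y u = comp D (eps Y) (comp D (Fa u) (xi X))" for X Y u
  have Ph: "P X Y u \<in> Hom D X Y" if "X \<in> Ob D" "Y \<in> Ob D" "u \<in> Hom C (Go X) (Go Y)" for X Y u
    unfolding P_def using cat_comp[OF Dc cat_comp[OF Dc xi_h[OF that(1)] Fh[OF that(3)]] eps_h[OF that(2)]] .
  have PG: "Ga (P X Y u) = u" if "X \<in> Ob D" "Y \<in> Ob D" "u \<in> Hom C (Go X) (Go Y)" for X Y u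
  proof -
    have fu: "comp D (Fa u) (xi X) \<in> Hom D X (Fo (Go Y))"
      using cat_comp[OF Dc xi_h[OF that(1)] Fh[OF that(3)]] .
    have "Ga (P X Y u) = comp C (Ga (eps Y)) (comp C (Ga (Fa u)) (eta (Go X)))"
      unfolding P_def using fun_comp[OF G fu eps_h[OF that(2)]] fun_comp[OF G xi_h[OF that(1)] Fh[OF that(3)]] Gxi[OF that(1)] by simp
    also have "\<dots> = comp C (comp C (Ga (eps Y)) (Ga (Fa u))) (eta (Go X))"
      using cat_assoc[OF Cc eta_h[OF Gob[OF that(1)]] Gh[OF Fh[OF that(3)]] Gh[OF eps_h[OF that(2)]]] .
    also have "\<dots> = comp C (Ga (comp D (eps Y) (Fa u))) (eta (Go X))"
      using fun_comp[OF G Fh[OF that(3)] eps_h[OF that(2)]] by simp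
    also have "\<dots> = u" using transp2[OF that(3,2)] by simp
    finally show ?thesis .
  qed
  have Pn: "P X T (comp C (Ga h) (comp C g (Ga f))) = comp D h (comp D (P Y Z g) f)"
    if ob: "X \<in> Ob D" "Y \<in> Ob D" "Z \<in> Ob D" "T \<in> Ob D"
      and f: "f \<in> Hom D X Y" and g: "g \<in> Hom C (Go Y) (Go Z)" and h: "h \<in> Hom D Z T"
    for X Y Z T f g h
  proof -
    define a where "a = Fa (Ga h)"
    define b where "b = Fa g"
    define c where "c = Fa (Ga f)"
    have ah: "a \<in> Hom D (Fo (Go Z)) (Fo (Go T))" unfolding a_def using Fh[OF Gh[OF h]] .
    have bh: "b \<in> Hom D (Fo (Go Y)) (Fo (Go Z))" unfolding b_def using Fh[OF g] .
    have ch: "c \<in> Hom D (Fo (Go X)) (Fo (Go Y))" unfolding c_def using Fh[OF Gh[OF f]] .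
    have eX: "xi X \<in> Hom D X (Fo (Go X))" using xi_h[OF ob(1)] .
    have eY: "xi Y \<in> Hom D Y (Fo (Go Y))" using xi_h[OF ob(2)] .
    have nT: "eps T \<in> Hom D (Fo (Go T)) T" using eps_h[OF ob(4)] .
    have nZ: "eps Z \<in> Hom D (Fo (Go Z)) Z" using eps_h[OF ob(3)] .
    have gf: "comp C g (Ga f) \<in> Hom C (Go X) (Go Z)" using cat_comp[OF Cc Gh[OF f] g] .
    have "Fa (comp C (Ga h) (comp C g (Ga f))) = comp D a (comp D b c)"
      unfolding a_def b_def c_def using fun_comp[OF F gf Gh[OF h]] fun_comp[OF F Gh[OF f] g] by simp
    then have "P X T (comp C (Ga h) (comp C g (Ga f))) = comp D (eps T) (comp D (comp D a (comp D b c)) (xi X))"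
      unfolding P_def by simp
    also have "\<dots> = comp D (eps T) (comp D a (comp D (comp D b c) (xi X)))"
      using cat_assoc[OF Dc eX cat_comp[OF Dc ch bh] ah] by simp
    also have "\<dots> = comp D (eps T) (comp D a (comp D b (comp D c (xi X))))"
      using cat_assoc[OF Dc eX ch bh] by simp
    also have "\<dots> = comp D (comp D (eps T) a) (comp D b (comp D c (xi X)))"
      using cat_assoc[OF Dc cat_comp[OF Dc cat_comp[OF Dc eX ch] bh] ah nT] .
    also have "\<dots> = comp D (comp D h (eps Z)) (comp D b (comp D (xi Y) f))"
      unfolding a_def c_def using eps_n[OF h] xi_n[OF f] by simp
    also have "\<dots> = comp D h (comp D (eps Z) (comp D b (comp D (xi Y) f)))"
      using cat_assoc[OF Dc cat_comp[OF Dc cat_comp[OF Dc f eY] bh] nZ h] by simp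
    also have "\<dots> = comp D h (comp D (eps Z) (comp D (comp D b (xi Y)) f))"
      using cat_assoc[OF Dc f eY bh] by simp
    also have "\<dots> = comp D h (comp D (comp D (eps Z) (comp D b (xi Y))) f)"
      using cat_assoc[OF Dc f cat_comp[OF Dc eY bh] nZ] by simp
    also have "\<dots> = comp D h (comp D (P Y Z g) f)" unfolding P_def b_def by simp
    finally show ?thesis .
  qed
  show ?thesis unfolding naturally_full_def
    apply (rule exI[of _ P])
    using Ph Pn PG by blast
qed

end

theorem theorem2p6:
  fixes C :: "('o, 'a) category" and D :: "('p, 'b) category"
    and Fo :: "'o \<Rightarrow> 'p" and Fa :: "'a \<Rightarrow> 'b"
    and Go :: "'p \<Rightarrow> 'o" and Ga :: "'b \<Rightarrow> 'a"
    and eta :: "'o \<Rightarrow> 'a" and eps :: "'p \<Rightarrow> 'b"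
  assumes adj: "is_adjunction C D Fo Fa Go Ga eta eps"
  shows "(naturally_full C D Fo Fa \<longleftrightarrow>
            (\<exists>nu. is_nat_trans C C (Go \<circ> Fo) (Ga \<circ> Fa) id id nu
                 \<and> (\<forall>X \<in> Ob C. comp C (eta X) (nu X) = idt C (Go (Fo X)))))
       \<and> (naturally_full C D Fo Fa \<longrightarrow>
            (\<forall>X \<in> Ob C. comp D (eps (Fo X)) (Fa (eta X)) = idt D (Fo X)
                      \<and> comp D (Fa (eta X)) (eps (Fo X)) = idt D (Fo (Go (Fo X)))))
       \<and> (naturally_full D C Go Ga \<longleftrightarrow>
            (\<exists>xi. is_nat_trans D D id id (Fo \<circ> Go) (Fa \<circ> Ga) xi
                 \<and> (\<forall>Y \<in> Ob D. comp D (xi Y) (eps Y) = idt D (Fo (Go Y)))))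
       \<and> (naturally_full D C Go Ga \<longrightarrow>
            (\<forall>Y \<in> Ob D. comp C (Ga (eps Y)) (eta (Go Y)) = idt C (Go Y)
                      \<and> comp C (eta (Go Y)) (Ga (eps Y)) = idt C (Go (Fo (Go Y)))))"
proof -
  interpret adjn C D Fo Fa Go Ga eta eps using adj by (rule adjn.intro)
  show ?thesis using part1a part1b part2a part2b by blast
qed

end
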